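(* Let $\mu\ge 1$, $x\ge 0$, $y>0$. Then $\dfrac{\partial^2 Q_{\mu}(x,y)}{\partial y^2}>0$ if $y>x+\mu-1$, and $\dfrac{\partial^2 Q_{\mu}(x,y)}{\partial y^2}<0$ if $y<x+\mu-2$. If moreover $\mu\ge 3/2$, then $\dfrac{\partial^2 Q_{\mu}(x,y)}{\partial y^2}<0$ whenever $y<x+\mu-3/2$.
   Context: For real $\mu$, $x>0$, $y\ge 0$, the generalized Marcum $Q$-function is $Q_{\mu}(x,y)=x^{\frac12(1-\mu)}\int_y^{\infty} t^{\frac12(\mu-1)}e^{-t-x}I_{\mu-1}(2\sqrt{xt})\,dt$, where $I_\nu$ is the modified Bessel function of the first kind; at $x=0$ it is defined by continuity, $Q_\mu(0,y)=\Gamma(\mu,y)/\Gamma(\mu)$. *)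

theory Defs
  imports "HOL-Analysis.Analysis"
begin

text \<open>Modified Bessel function of the first kind, via its power series
  I_nu(z) = sum_k (z/2)^(2k+nu) / (k! Gamma(k+nu+1)), for z > 0
  (rGamma = 1/Gamma, entire).\<close>
definition besselI :: "real \<Rightarrow> real \<Rightarrow> real" where
  "besselI \<nu> z = (\<Sum>k. (z / 2) powr (2 * real k + \<nu>) * rGamma (real k + \<nu> + 1) / fact k)"

definition upper_Gamma :: "real \<Rightarrow> real \<Rightarrow> real" where
  "upper_Gamma a y = (LBINT t:{y..}. t powr (a - 1) * exp (- t))"

definition marcumQ :: "real \<Rightarrow> real \<Rightarrow> real \<Rightarrow> real" where
  "marcumQ \<mu> x y =
     (if x = 0 then upper_Gamma \<mu> y / Gamma \<mu>
      else x powr ((1 - \<mu>) / 2) *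
        (LBINT t:{y..}. t powr ((\<mu> - 1) / 2) * exp (- t - x) * besselI (\<mu> - 1) (2 * sqrt (x * t))))"

end

theory Submission
  imports Defs
begin


lemma sum_rev_atMost: "(\<Sum>j\<le>n. g j) = (\<Sum>j\<le>n. g (n - j))" for g :: "nat \<Rightarrow> real"
  by (rule sum.reindex_bij_witness[where i="\<lambda>i. n - i" and j="\<lambda>i. n - i"]) auto

lemma pern:
  fixes u :: "nat \<Rightarrow> real" and c s :: real and n :: nat
  assumes rec: "\<And>k. s * u k = (real k + 1) * (real k + 1 + c) * u (Suc k)"
  defines "v \<equiv> \<lambda>j. u j * u (n - j)"
  shows "(real n + c - 1/2) * (\<Sum>j\<le>n. v j * (2 * real j - real n)^2)
         = real n * (real n + 2*c) / 2 * (\<Sum>j\<le>n. v j)"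
proof -
  have st1: "v (Suc j) * ((real j + 1) * (real j + 1 + c)) = v j * ((real n - real j) * (real n - real j + c))"
    if "j < n" for j
  proof -
    have e1: "n - j = Suc (n - Suc j)" using that by simp
    have e2: "real (n - Suc j) + 1 = real n - real j" using that by (simp add: of_nat_diff)
    have r1: "s * u (n - Suc j) = (real n - real j) * (real n - real j + c) * u (n - j)"
      using rec[of "n - Suc j"] e1 e2 by simp
    have "v (Suc j) * ((real j + 1) * (real j + 1 + c)) = (s * u j) * u (n - Suc j)"
      unfolding v_def using rec[of j] by (simp add: algebra_simps)
    also have "\<dots> = u j * (s * u (n - Suc j))" by simp
    also have "\<dots> = v j * ((real n - real j) * (real n - real j + c))"
      unfolding v_def r1 by simp
    finally show ?thesis .
  qed
  define P where "P = (\<lambda>j::nat. real j * (real n - real j) * (real n - real j + c)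
                          - real j * (real j + c) * (real j - 1))"
  have L: "(\<Sum>j<n. v (Suc j) * ((real j + 1) * (real j + 1 + c)) * real j)
        = (\<Sum>j\<le>n. v j * (real j * (real j + c) * (real j - 1)))"
  proof -
    have "(\<Sum>j\<le>n. v j * (real j * (real j + c) * (real j - 1)))
        = (\<Sum>j<Suc n. v j * (real j * (real j + c) * (real j - 1)))"
      by (simp add: lessThan_Suc_atMost)
    also have "\<dots> = (\<Sum>j<n. v (Suc j) * (real (Suc j) * (real (Suc j) + c) * (real (Suc j) - 1)))"
      by (subst sum.lessThan_Suc_shift) simp
    finally show ?thesis by (simp add: algebra_simps)
  qed
  have R: "(\<Sum>j<n. v j * ((real n - real j) * (real n - real j + c)) * real j)
        = (\<Sum>j\<le>n. v j * (real j * (real n - real j) * (real n - real j + c)))"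
    by (simp add: lessThan_Suc_atMost[symmetric] algebra_simps)
  have "(\<Sum>j<n. v (Suc j) * ((real j + 1) * (real j + 1 + c)) * real j)
      = (\<Sum>j<n. v j * ((real n - real j) * (real n - real j + c)) * real j)"
    by (intro sum.cong refl) (simp add: st1)
  hence S0: "(\<Sum>j\<le>n. v j * P j) = 0"
    using L R by (simp add: P_def right_diff_distrib sum_subtractf)
  have vs: "v (n - j) = v j" if "j \<le> n" for j using that by (simp add: v_def)
  have "(\<Sum>j\<le>n. v j * P j) = (\<Sum>j\<le>n. v (n - j) * P (n - j))"
    by (rule sum_rev_atMost)
  also have "\<dots> = (\<Sum>j\<le>n. v j * P (n - j))"
    by (intro sum.cong refl) (simp add: vs)
  finally have S1: "(\<Sum>j\<le>n. v j * P (n - j)) = 0" using S0 by simp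
  have pt: "P j + P (n - j) = -(real n + c - 1/2) * (2 * real j - real n)^2 + real n * (real n + 2*c) / 2"
    if "j \<le> n" for j
    using that by (simp add: P_def of_nat_diff power2_eq_square field_simps)
  define K1 where "K1 = -(real n + c - 1/2)"
  define K2 where "K2 = real n * (real n + 2*c) / 2"
  have pt': "P j + P (n - j) = K1 * (2 * real j - real n)^2 + K2" if "j \<le> n" for j
    using pt[OF that] by (simp add: K1_def K2_def)
  have "0 = (\<Sum>j\<le>n. v j * (P j + P (n - j)))"
    using S0 S1 by (simp add: distrib_left sum.distrib)
  also have "\<dots> = (\<Sum>j\<le>n. v j * (K1 * (2 * real j - real n)^2 + K2))"
    by (intro sum.cong refl) (simp add: pt')
  also have "\<dots> = K1 * (\<Sum>j\<le>n. v j * (2 * real j - real n)^2) + K2 * (\<Sum>j\<le>n. v j)"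
    by (simp add: distrib_left sum.distrib sum_distrib_left mult.left_commute mult.commute[of "v _"])
  finally show ?thesis by (simp add: K1_def K2_def) argo
qed

lemma pern_ineq:
  fixes u :: "nat \<Rightarrow> real" and c s :: real and n :: nat
  assumes rec: "\<And>k. s * u k = (real k + 1) * (real k + 1 + c) * u (Suc k)"
    and nn: "\<And>k. u k \<ge> 0" and c0: "c \<ge> 0"
  shows "(\<Sum>j\<le>n. u j * u (n - j) * (2 * real j - real n)^2) \<ge> 0"
    and "(\<Sum>j\<le>n. u j * u (n - j) * (2 * real j - real n)^2) \<le> real n * (\<Sum>j\<le>n. u j * u (n - j))"
    and "c \<ge> 1/2 \<Longrightarrow> (\<Sum>j\<le>n. u j * u (n - j) * (2 * real j - real n)^2) \<le> (real n / 2 + c) * (\<Sum>j\<le>n. u j * u (n - j))"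
proof -
  define S2 where "S2 = (\<Sum>j\<le>n. u j * u (n - j) * (2 * real j - real n)^2)"
  define S0 where "S0 = (\<Sum>j\<le>n. u j * u (n - j))"
  have id: "(real n + c - 1/2) * S2 = real n * (real n + 2*c) / 2 * S0"
    unfolding S2_def S0_def using pern[OF rec, of n] by simp
  have S2nn: "S2 \<ge> 0" unfolding S2_def by (intro sum_nonneg) (simp add: nn)
  have S0nn: "S0 \<ge> 0" unfolding S0_def by (intro sum_nonneg) (simp add: nn)
  show "(\<Sum>j\<le>n. u j * u (n - j) * (2 * real j - real n)^2) \<ge> 0" using S2nn by (simp add: S2_def)
  have n0: "S2 = 0" if "n = 0" unfolding S2_def using that by simp
  show "(\<Sum>j\<le>n. u j * u (n - j) * (2 * real j - real n)^2) \<le> real n * (\<Sum>j\<le>n. u j * u (n - j))"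
  proof (cases "n = 0")
    case True thus ?thesis using n0 by (simp add: S2_def)
  next
    case False
    hence n1: "real n \<ge> 1" by simp
    have k: "real n * (real n + 2*c) / 2 \<le> (real n + c - 1/2) * real n"
    proof -
      have "0 \<le> real n * (real n - 1)" using n1 by simp
      thus ?thesis by (simp add: field_simps algebra_simps)
    qed
    have "(real n + c - 1/2) * S2 \<le> (real n + c - 1/2) * (real n * S0)"
      unfolding id using mult_right_mono[OF k S0nn] by (simp add: mult.assoc)
    hence "S2 \<le> real n * S0" using n1 c0 by (subst (asm) mult_le_cancel_left_pos) auto
    thus ?thesis by (simp add: S2_def S0_def)
  qed
  assume c1: "c \<ge> 1/2"
  show "(\<Sum>j\<le>n. u j * u (n - j) * (2 * real j - real n)^2) \<le> (real n / 2 + c) * (\<Sum>j\<le>n. u j * u (n - j))"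
  proof (cases "real n + c - 1/2 = 0")
    case True
    hence "n = 0" using c1 by linarith
    thus ?thesis using n0 S0nn c0 by (simp add: S2_def S0_def)
  next
    case False
    hence pos: "real n + c - 1/2 > 0" using c1 by linarith
    have k: "real n * (real n + 2*c) / 2 \<le> (real n + c - 1/2) * (real n / 2 + c)"
    proof -
      have "0 \<le> (real n + 2*c) * (c - 1/2)" using c1 c0 by simp
      thus ?thesis by (simp add: field_simps algebra_simps)
    qed
    have "(real n + c - 1/2) * S2 \<le> (real n + c - 1/2) * ((real n / 2 + c) * S0)"
      unfolding id using mult_right_mono[OF k S0nn] by (simp add: mult.assoc)
    hence "S2 \<le> (real n / 2 + c) * S0" using pos by (subst (asm) mult_le_cancel_left_pos) auto
    thus ?thesis by (simp add: S2_def S0_def)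
  qed
qed

lemma cp_sums:
  fixes p q :: "nat \<Rightarrow> real"
  assumes "summable p" "summable q" "\<And>k. p k \<ge> 0" "\<And>k. q k \<ge> 0"
  shows "(\<lambda>n. \<Sum>i\<le>n. p i * q (n - i)) sums (suminf p * suminf q)"
proof -
  have "summable (\<lambda>k. norm (p k))" "summable (\<lambda>k. norm (q k))"
    using assms by (simp_all add: abs_of_nonneg)
  from Cauchy_product_sums[OF this] show ?thesis .
qed

lemma glob:
  fixes u :: "nat \<Rightarrow> real" and c s :: real
  assumes rec: "\<And>k. s * u k = (real k + 1) * (real k + 1 + c) * u (Suc k)"
    and nn: "\<And>k. u k \<ge> 0" and c0: "c \<ge> 0"
    and su: "summable u" and su2: "summable (\<lambda>k. real k ^ 2 * u k)"
  defines "A \<equiv> suminf u" and "M1 \<equiv> (\<Sum>k. real k * u k)" and "M2 \<equiv> (\<Sum>k. real k ^ 2 * u k)"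
  shows "M1^2 \<le> A * M2" and "A * M2 - M1^2 \<le> M1 * A"
    and "c \<ge> 1/2 \<Longrightarrow> A * M2 - M1^2 \<le> M1 * A / 2 + c * A^2 / 2"
    and "s * A = M2 + c * M1"
proof -
  have su1: "summable (\<lambda>k. real k * u k)"
  proof (rule summable_comparison_test[OF _ su2])
    show "\<exists>N. \<forall>n\<ge>N. norm (real n * u n) \<le> real n ^ 2 * u n"
    proof (intro exI allI impI)
      fix n :: nat
      have "real n \<le> real n ^ 2" by (cases n) (auto simp: power2_eq_square)
      thus "norm (real n * u n) \<le> real n ^ 2 * u n" using nn[of n] by (simp add: abs_mult mult_right_mono)
    qed
  qed
  have nn1: "\<And>k. real k * u k \<ge> 0" and nn2: "\<And>k. real k ^ 2 * u k \<ge> 0" using nn by simp_all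
  define v where "v = (\<lambda>n j. u j * u (n - j))"
  have C00: "(\<lambda>n. \<Sum>i\<le>n. u i * u (n - i)) sums (A * A)"
    unfolding A_def by (rule cp_sums[OF su su nn nn])
  have C20: "(\<lambda>n. \<Sum>i\<le>n. (real i ^ 2 * u i) * u (n - i)) sums (M2 * A)"
    unfolding A_def M2_def by (rule cp_sums[OF su2 su nn2 nn])
  have C02: "(\<lambda>n. \<Sum>i\<le>n. u i * (real (n - i) ^ 2 * u (n - i))) sums (A * M2)"
    unfolding A_def M2_def by (rule cp_sums[OF su su2 nn nn2])
  have C11: "(\<lambda>n. \<Sum>i\<le>n. (real i * u i) * (real (n - i) * u (n - i))) sums (M1 * M1)"
    unfolding M1_def by (rule cp_sums[OF su1 su1 nn1 nn1])
  have C10: "(\<lambda>n. \<Sum>i\<le>n. (real i * u i) * u (n - i)) sums (M1 * A)"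
    unfolding A_def M1_def by (rule cp_sums[OF su1 su nn1 nn])
  have C01: "(\<lambda>n. \<Sum>i\<le>n. u i * (real (n - i) * u (n - i))) sums (A * M1)"
    unfolding A_def M1_def by (rule cp_sums[OF su su1 nn nn1])
  have S2sums: "(\<lambda>n. \<Sum>j\<le>n. u j * u (n - j) * (2 * real j - real n)^2) sums (M2 * A + A * M2 - 2 * (M1 * M1))"
  proof -
    have "(\<lambda>n. (\<Sum>i\<le>n. (real i ^ 2 * u i) * u (n - i)) + (\<Sum>i\<le>n. u i * (real (n - i) ^ 2 * u (n - i)))
            - 2 * (\<Sum>i\<le>n. (real i * u i) * (real (n - i) * u (n - i)))) sums (M2 * A + A * M2 - 2 * (M1 * M1))"
      by (intro sums_diff sums_add sums_mult C20 C02 C11)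
    moreover have "(\<Sum>i\<le>n. (real i ^ 2 * u i) * u (n - i)) + (\<Sum>i\<le>n. u i * (real (n - i) ^ 2 * u (n - i)))
            - 2 * (\<Sum>i\<le>n. (real i * u i) * (real (n - i) * u (n - i)))
          = (\<Sum>j\<le>n. u j * u (n - j) * (2 * real j - real n)^2)" for n
    proof -
      have "(\<Sum>i\<le>n. (real i ^ 2 * u i) * u (n - i)) + (\<Sum>i\<le>n. u i * (real (n - i) ^ 2 * u (n - i)))
            - 2 * (\<Sum>i\<le>n. (real i * u i) * (real (n - i) * u (n - i)))
          = (\<Sum>i\<le>n. (real i ^ 2 * u i) * u (n - i) + u i * (real (n - i) ^ 2 * u (n - i))
            - 2 * ((real i * u i) * (real (n - i) * u (n - i))))"
        by (simp add: sum.distrib sum_subtractf sum_distrib_left)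
      also have "\<dots> = (\<Sum>j\<le>n. u j * u (n - j) * (2 * real j - real n)^2)"
        by (intro sum.cong refl) (auto simp: of_nat_diff power2_eq_square algebra_simps)
      finally show ?thesis .
    qed
    ultimately show ?thesis by simp
  qed
  have S1sums: "(\<lambda>n. real n * (\<Sum>j\<le>n. u j * u (n - j))) sums (M1 * A + A * M1)"
  proof -
    have "(\<lambda>n. (\<Sum>i\<le>n. (real i * u i) * u (n - i)) + (\<Sum>i\<le>n. u i * (real (n - i) * u (n - i)))) sums (M1 * A + A * M1)"
      by (intro sums_add C10 C01)
    moreover have "(\<Sum>i\<le>n. (real i * u i) * u (n - i)) + (\<Sum>i\<le>n. u i * (real (n - i) * u (n - i)))
        = real n * (\<Sum>j\<le>n. u j * u (n - j))" for n
    proof -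
      have "(\<Sum>i\<le>n. (real i * u i) * u (n - i)) + (\<Sum>i\<le>n. u i * (real (n - i) * u (n - i)))
          = (\<Sum>i\<le>n. (real i * u i) * u (n - i) + u i * (real (n - i) * u (n - i)))"
        by (simp add: sum.distrib)
      also have "\<dots> = (\<Sum>j\<le>n. real n * (u j * u (n - j)))"
        by (intro sum.cong refl) (auto simp: of_nat_diff algebra_simps)
      finally show ?thesis by (simp add: sum_distrib_left)
    qed
    ultimately show ?thesis by simp
  qed
  show "M1^2 \<le> A * M2"
  proof -
    have "0 \<le> M2 * A + A * M2 - 2 * (M1 * M1)"
      using sums_le[OF _ sums_zero S2sums] pern_ineq(1)[OF rec nn c0] by blast
    thus ?thesis by (simp add: power2_eq_square algebra_simps)
  qed
  show "A * M2 - M1^2 \<le> M1 * A"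
  proof -
    have "M2 * A + A * M2 - 2 * (M1 * M1) \<le> M1 * A + A * M1"
      using sums_le[OF _ S2sums S1sums] pern_ineq(2)[OF rec nn c0] by blast
    thus ?thesis by (simp add: power2_eq_square algebra_simps)
  qed
  show "A * M2 - M1^2 \<le> M1 * A / 2 + c * A^2 / 2" if c1: "c \<ge> 1/2"
  proof -
    have "(\<lambda>n. (1/2) * (real n * (\<Sum>j\<le>n. u j * u (n - j))) + c * (\<Sum>j\<le>n. u j * u (n - j)))
           sums ((1/2) * (M1 * A + A * M1) + c * (A * A))"
      by (intro sums_add sums_mult S1sums C00)
    note T = this
    have "M2 * A + A * M2 - 2 * (M1 * M1) \<le> (1/2) * (M1 * A + A * M1) + c * (A * A)"
    proof (rule sums_le[OF _ S2sums T])
      fix n show "(\<Sum>j\<le>n. u j * u (n - j) * (2 * real j - real n)^2)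
         \<le> (1/2) * (real n * (\<Sum>j\<le>n. u j * u (n - j))) + c * (\<Sum>j\<le>n. u j * u (n - j))"
        using pern_ineq(3)[OF rec nn c0 c1, of n] by (simp add: algebra_simps)
    qed
    thus ?thesis by (simp add: power2_eq_square algebra_simps)
  qed
  show "s * A = M2 + c * M1"
  proof -
    have "(\<lambda>k. real k ^ 2 * u k + c * (real k * u k)) sums (M2 + c * M1)"
      unfolding M1_def M2_def by (intro sums_add sums_mult summable_sums su1 su2)
    hence "(\<lambda>k. real (Suc k) ^ 2 * u (Suc k) + c * (real (Suc k) * u (Suc k))) sums (M2 + c * M1)"
      by (subst sums_Suc_iff) simp
    moreover have "(\<lambda>k. s * u k) sums (s * A)" unfolding A_def by (intro sums_mult summable_sums su)
    moreover have "s * u k = real (Suc k) ^ 2 * u (Suc k) + c * (real (Suc k) * u (Suc k))" for k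
      using rec[of k] by (simp add: power2_eq_square algebra_simps)
    ultimately show ?thesis using sums_unique2 by fastforce
  qed
qed

lemma core_sign:
  fixes u :: "nat \<Rightarrow> real" and c x y :: real
  assumes rec: "\<And>k. (x * y) * u k = (real k + 1) * (real k + 1 + c) * u (Suc k)"
    and nn: "\<And>k. u k \<ge> 0" and c0: "c \<ge> 0" and x0: "x \<ge> 0" and y0: "y > 0"
    and su: "summable u" and su2: "summable (\<lambda>k. real k ^ 2 * u k)"
    and Apos: "suminf u > 0"
  defines "E \<equiv> (c - y) * suminf u + (\<Sum>k. real k * u k)"
  shows "y > x + c \<Longrightarrow> E < 0" and "y < x + c - 1 \<Longrightarrow> E > 0"
    and "c \<ge> 1/2 \<Longrightarrow> y < x + c - 1/2 \<Longrightarrow> E > 0"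
proof -
  define A where "A = suminf u"
  define M1 where "M1 = (\<Sum>k. real k * u k)"
  define M2 where "M2 = (\<Sum>k. real k ^ 2 * u k)"
  note G = glob[OF rec nn c0 su su2, folded A_def M1_def M2_def]
  have A0: "A > 0" using Apos by (simp add: A_def)
  have M1nn: "M1 \<ge> 0" unfolding M1_def
  proof (rule suminf_nonneg)
    show "summable (\<lambda>k. real k * u k)"
    proof (rule summable_comparison_test[OF _ su2])
      show "\<exists>N. \<forall>n\<ge>N. norm (real n * u n) \<le> real n ^ 2 * u n"
      proof (intro exI allI impI)
        fix n :: nat
        have "real n \<le> real n ^ 2" by (cases n) (auto simp: power2_eq_square)
        thus "norm (real n * u n) \<le> real n ^ 2 * u n" using nn[of n] by (simp add: abs_mult mult_right_mono)
      qed
    qed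
  qed (simp add: nn)
  have E_eq: "E = (c - y) * A + M1" by (simp add: E_def A_def M1_def)
  have sA: "x * y * A^2 = A * M2 + c * A * M1" using G(4) by (simp add: power2_eq_square algebra_simps)
  define w where "w = y - c"
  show "E < 0" if h: "y > x + c"
  proof (rule ccontr)
    assume "\<not> E < 0"
    hence M1ge: "M1 \<ge> w * A" unfolding E_eq w_def by (simp add: algebra_simps)
    have w0: "w > x" using h by (simp add: w_def)
    hence w00: "w \<ge> 0" using x0 by simp
    have "(w * A) * (w * A) \<le> M1 * M1" using M1ge w00 A0 M1nn by (intro mult_mono) auto
    moreover have "c * (w * A) * A \<le> c * M1 * A" using M1ge c0 A0 by (intro mult_right_mono mult_left_mono) auto
    ultimately have "w * y * A^2 \<le> M1^2 + c * A * M1"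
      by (simp add: w_def power2_eq_square algebra_simps)
    also have "\<dots> \<le> x * y * A^2" using G(1) sA by simp
    finally have "w * (y * A^2) \<le> x * (y * A^2)" by (simp add: algebra_simps)
    moreover have "y * A^2 > 0" using y0 A0 by simp
    ultimately show False using w0 by (simp add: mult_le_cancel_right_pos)
  qed
  show "E > 0" if h: "y < x + c - 1"
  proof (rule ccontr)
    assume "\<not> E > 0"
    hence M1le: "M1 \<le> w * A" unfolding E_eq w_def by (simp add: algebra_simps)
    have w00: "w \<ge> 0"
    proof (rule ccontr)
      assume "\<not> w \<ge> 0" hence "w * A < 0" using A0 by (simp add: mult_neg_pos)
      thus False using M1le M1nn by simp
    qed
    have xw: "x > w + 1" using h by (simp add: w_def)
    have "x * y * A^2 \<le> M1 * M1 + (c + 1) * A * M1" using sA G(2) by (simp add: power2_eq_square algebra_simps)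
    also have "\<dots> \<le> (w * A) * (w * A) + (c + 1) * A * (w * A)"
      using M1le M1nn A0 c0 by (intro add_mono mult_mono mult_left_mono) auto
    also have "\<dots> = (w * (w + c + 1)) * A^2" by (simp add: power2_eq_square algebra_simps)
    finally have 1: "x * y * A^2 \<le> (w * (w + c + 1)) * A^2" .
    have "w * (w + c + 1) \<le> (w + 1) * y" using c0 by (simp add: w_def algebra_simps)
    also have "\<dots> < x * y" using xw y0 by (intro mult_strict_right_mono) auto
    finally have "(w * (w + c + 1)) * A^2 < x * y * A^2" using A0 by (intro mult_strict_right_mono) auto
    thus False using 1 by simp
  qed
  show "E > 0" if c1: "c \<ge> 1/2" and h: "y < x + c - 1/2"
  proof (rule ccontr)
    assume "\<not> E > 0"
    hence M1le: "M1 \<le> w * A" unfolding E_eq w_def by (simp add: algebra_simps)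
    have w00: "w \<ge> 0"
    proof (rule ccontr)
      assume "\<not> w \<ge> 0" hence "w * A < 0" using A0 by (simp add: mult_neg_pos)
      thus False using M1le M1nn by simp
    qed
    have xw: "x > w + 1/2" using h by (simp add: w_def)
    have "x * y * A^2 \<le> (M1 + A/2) * (M1 + c * A)" using sA G(3)[OF c1] by (simp add: power2_eq_square field_simps)
    also have "\<dots> \<le> (w * A + A/2) * (w * A + c * A)"
      using M1le M1nn A0 c0 by (intro mult_mono add_mono) auto
    also have "\<dots> = ((w + 1/2) * y) * A^2" by (simp add: w_def power2_eq_square algebra_simps)
    finally have 1: "x * y * A^2 \<le> ((w + 1/2) * y) * A^2" .
    have lt: "(w + 1/2) * y < x * y" using xw y0 by (intro mult_strict_right_mono) auto
    have "((w + 1/2) * y) * A^2 < x * y * A^2" using mult_strict_right_mono[OF lt, of "A^2"] A0 by simp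
    thus False using 1 by simp
  qed
qed



definition aco :: "real \<Rightarrow> real \<Rightarrow> nat \<Rightarrow> real" where
  "aco c x k = x ^ k * rGamma (real k + c + 1) / fact k"

definition hh :: "real \<Rightarrow> real \<Rightarrow> real \<Rightarrow> real" where
  "hh c x t = (\<Sum>k. aco c x k * t ^ k)"

definition FF :: "real \<Rightarrow> real \<Rightarrow> real \<Rightarrow> real" where
  "FF c x t = exp (- x - t) * t powr c * hh c x t"

lemma rG:
  fixes c :: real assumes c0: "c \<ge> 0"
  shows "rGamma (real k + c + 1) > 0 \<and> rGamma (real k + c + 1) \<le> rGamma (c + 1) / fact k"
proof (induction k)
  case 0
  have "rGamma (c + 1) > 0" using c0 by (simp add: rGamma_inverse_Gamma Gamma_real_pos)
  thus ?case by simp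
next
  case (Suc k)
  define z where "z = real k + c + 1"
  have z1: "z \<ge> real k + 1" using c0 by (simp add: z_def)
  have e: "real (Suc k) + c + 1 = z + 1" by (simp add: z_def)
  have r: "rGamma (z + 1) = rGamma z / z" using rGamma_plus1[of z] z1
    by (simp add: field_simps)
  have p: "rGamma z > 0" "rGamma z \<le> rGamma (c + 1) / fact k" using Suc by (simp_all add: z_def)
  have "rGamma z / z \<le> (rGamma (c + 1) / fact k) / (real k + 1)"
    using p z1 by (intro frac_le) auto
  also have "\<dots> = rGamma (c + 1) / fact (Suc k)" by (simp add: fact_Suc field_simps)
  finally have "rGamma z / z \<le> rGamma (c + 1) / fact (Suc k)" .
  moreover have "rGamma z / z > 0" using p z1 by simp
  moreover have "rGamma (real (Suc k) + c + 1) = rGamma z / z" by (subst e) (rule r)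
  ultimately show ?case by simp
qed

lemma aco_nonneg: "c \<ge> 0 \<Longrightarrow> x \<ge> 0 \<Longrightarrow> aco c x k \<ge> 0"
  using rG[of c k] by (simp add: aco_def)

lemma aco_bound:
  assumes "c \<ge> 0" "x \<ge> 0"
  shows "\<bar>aco c x k * t ^ k\<bar> \<le> rGamma (c + 1) * ((x * \<bar>t\<bar>) ^ k / fact k) / fact k"
proof -
  have "\<bar>aco c x k * t ^ k\<bar> = x ^ k * \<bar>t\<bar> ^ k * rGamma (real k + c + 1) / fact k"
    using rG[of c k] assms by (simp add: aco_def abs_mult power_abs)
  also have "\<dots> \<le> x ^ k * \<bar>t\<bar> ^ k * (rGamma (c + 1) / fact k) / fact k"
    using rG[of c k] assms by (intro divide_right_mono mult_left_mono) auto
  also have "\<dots> = rGamma (c + 1) * ((x * \<bar>t\<bar>) ^ k / fact k) / fact k"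
    by (simp add: power_mult_distrib)
  finally show ?thesis .
qed

lemma aco_summable:
  assumes "c \<ge> 0" "x \<ge> 0"
  shows "summable (\<lambda>k. aco c x k * t ^ k)"
proof (rule summable_comparison_test)
  show "summable (\<lambda>k. rGamma (c + 1) * ((x * \<bar>t\<bar>) ^ k / fact k))"
    by (intro summable_mult) (use summable_exp_generic[of "x * \<bar>t\<bar>"] in \<open>simp add: divide_inverse mult.commute\<close>)
  show "\<exists>N. \<forall>n\<ge>N. norm (aco c x n * t ^ n) \<le> rGamma (c + 1) * ((x * \<bar>t\<bar>) ^ n / fact n)"
  proof (intro exI allI impI)
    fix n :: nat
    have "rGamma (c + 1) * ((x * \<bar>t\<bar>) ^ n / fact n) / fact n \<le> rGamma (c + 1) * ((x * \<bar>t\<bar>) ^ n / fact n)"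
      using rG[of c 0] assms divide_left_mono[of 1 "fact n" "rGamma (c + 1) * ((x * \<bar>t\<bar>) ^ n / fact n)"]
      by (simp add: fact_ge_1)
    thus "norm (aco c x n * t ^ n) \<le> rGamma (c + 1) * ((x * \<bar>t\<bar>) ^ n / fact n)"
      using aco_bound[OF assms, of n t] by simp
  qed
qed

lemma term_le_exp: "y \<ge> 0 \<Longrightarrow> y ^ n / fact n \<le> exp y" for y :: real
proof -
  assume y: "y \<ge> 0"
  have eq: "(\<lambda>n. y ^ n /\<^sub>R fact n) = (\<lambda>n. y ^ n / fact n)" by (simp add: field_simps)
  have s: "(\<lambda>n. y ^ n / fact n) sums exp y" using exp_converges[of y] unfolding eq .
  have "sum (\<lambda>n. y ^ n / fact n) {n} \<le> suminf (\<lambda>n. y ^ n / fact n)"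
    using s y by (intro sum_le_suminf) (auto simp: sums_iff)
  thus ?thesis using s by (simp add: sums_iff)
qed

lemma hh_bound:
  assumes c0: "c \<ge> 0" and x0: "x \<ge> 0" and t0: "t \<ge> 0"
  shows "hh c x t \<le> rGamma (c + 1) * exp (2 * x) * exp (t / 2)"
proof -
  define R where "R = rGamma (c + 1)"
  have R0: "R \<ge> 0" using rG[of c 0] c0 by (simp add: R_def)
  have eq: "(\<lambda>n. (2*x) ^ n /\<^sub>R fact n) = (\<lambda>n. (2*x) ^ n / fact n)" by (simp add: field_simps)
  have s2: "(\<lambda>k. (2 * x) ^ k / fact k) sums exp (2 * x)"
    using exp_converges[of "2*x"] unfolding eq .
  have "(\<lambda>k. R * exp (t / 2) * ((2 * x) ^ k / fact k)) sums (R * exp (t / 2) * exp (2 * x))"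
    by (intro sums_mult s2)
  moreover have "aco c x k * t ^ k \<le> R * exp (t / 2) * ((2 * x) ^ k / fact k)" for k
  proof -
    have "aco c x k * t ^ k \<le> R * ((x * t) ^ k / fact k) / fact k"
      using aco_bound[OF c0 x0, of k t] t0 by (simp add: R_def)
    also have "\<dots> = R * ((2 * x) ^ k / fact k) * ((t / 2) ^ k / fact k)"
      by (simp add: power_mult_distrib field_simps)
    also have "\<dots> \<le> R * ((2 * x) ^ k / fact k) * exp (t / 2)"
      using term_le_exp[of "t/2" k] t0 x0 R0 by (intro mult_left_mono) auto
    finally show ?thesis by (simp add: mult_ac)
  qed
  ultimately have "hh c x t \<le> R * exp (t / 2) * exp (2 * x)"
    unfolding hh_def by (intro sums_le[OF _ summable_sums[OF aco_summable[OF c0 x0]]]) auto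
  thus ?thesis by (simp add: R_def mult_ac)
qed

lemma hh_nonneg: "c \<ge> 0 \<Longrightarrow> x \<ge> 0 \<Longrightarrow> t \<ge> 0 \<Longrightarrow> hh c x t \<ge> 0"
  unfolding hh_def using aco_nonneg by (intro suminf_nonneg aco_summable) auto

lemma int_major:
  fixes c :: real assumes c0: "c \<ge> 0"
  shows "set_integrable lborel {0<..} (\<lambda>t. t powr c / exp (t/2))"
proof -
  define g where "g = (\<lambda>t::real. t powr c / exp (t/2))"
  have H: "(\<lambda>t. complex_of_real t powr (complex_of_real (c+1) - 1) / of_real (exp (1/2 * t))) absolutely_integrable_on {0<..}"
    by (rule absolutely_integrable_Gamma_integral) (use c0 in auto)
  have cont: "continuous_on {0<..} g" unfolding g_def by (intro continuous_intros) auto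
  have mb: "(\<lambda>x. indicator {0<..} x *\<^sub>R g x) \<in> borel_measurable borel"
    by (rule borel_measurable_continuous_on_indicator[OF _ cont]) auto
  have mlb: "(\<lambda>x. indicator {0<..} x *\<^sub>R g x) \<in> borel_measurable lborel"
    using mb by simp
  have ml: "set_borel_measurable lebesgue {0<..} g"
    unfolding set_borel_measurable_def using mlb by (rule measurable_completion)
  have "set_integrable lebesgue {0<..} g"
  proof (rule set_integrable_bound[OF H ml])
    show "AE x in lebesgue. x \<in> {0<..} \<longrightarrow> norm (g x) \<le> norm (complex_of_real x powr (complex_of_real (c+1) - 1) / of_real (exp (1/2 * x)))"
    proof (rule AE_I2, rule impI)
      fix x :: real assume "x \<in> {0<..}"
      hence x: "x > 0" by simp
      have "complex_of_real x powr (complex_of_real (c+1) - 1) = of_real (x powr c)"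
        using powr_of_real[of x c] x by simp
      thus "norm (g x) \<le> norm (complex_of_real x powr (complex_of_real (c+1) - 1) / of_real (exp (1/2 * x)))"
        by (simp add: g_def norm_divide)
    qed
  qed
  thus ?thesis unfolding set_integrable_def g_def[symmetric]
    using integrable_completion[OF mlb] by simp
qed

lemma hh_deriv:
  assumes "c \<ge> 0" "x \<ge> 0"
  shows "(hh c x has_field_derivative (\<Sum>n. diffs (aco c x) n * t ^ n)) (at t)"
proof -
  have "((\<lambda>t. \<Sum>n. aco c x n * t ^ n) has_field_derivative (\<Sum>n. diffs (aco c x) n * t ^ n)) (at t)"
    by (rule termdiffs_strong_converges_everywhere) (rule aco_summable[OF assms])
  thus ?thesis by (simp add: hh_def[abs_def])
qed

lemma hh_cont: "c \<ge> 0 \<Longrightarrow> x \<ge> 0 \<Longrightarrow> continuous_on S (hh c x)"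
  by (intro continuous_at_imp_continuous_on ballI DERIV_isCont[OF hh_deriv])

lemma FF_cont: "c \<ge> 0 \<Longrightarrow> x \<ge> 0 \<Longrightarrow> continuous_on {0<..} (FF c x)"
  unfolding FF_def[abs_def] by (intro continuous_intros hh_cont) auto

lemma FF_integrable:
  assumes c0: "c \<ge> 0" and x0: "x \<ge> 0"
  shows "set_integrable lborel {0<..} (FF c x)"
proof -
  define K where "K = rGamma (c + 1) * exp x"
  have maj: "set_integrable lborel {0<..} (\<lambda>t. K * (t powr c / exp (t/2)))"
    by (intro set_integrable_mult_right int_major c0)
  have mb: "(\<lambda>t. indicator {0<..} t *\<^sub>R FF c x t) \<in> borel_measurable borel"
    by (rule borel_measurable_continuous_on_indicator[OF _ FF_cont[OF c0 x0]]) auto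
  have ml: "set_borel_measurable lborel {0<..} (FF c x)"
    unfolding set_borel_measurable_def using mb by simp
  show ?thesis
  proof (rule set_integrable_bound[OF maj ml], rule AE_I2, rule impI)
    fix t :: real assume "t \<in> {0<..}"
    hence t: "t > 0" by simp
    have R0: "rGamma (c + 1) \<ge> 0" using rG[of c 0] c0 by simp
    have hb: "0 \<le> hh c x t" "hh c x t \<le> rGamma (c + 1) * exp (2 * x) * exp (t / 2)"
      using hh_nonneg[OF c0 x0] hh_bound[OF c0 x0] t by auto
    have "norm (FF c x t) = exp (- x - t) * t powr c * hh c x t"
      using hb t by (simp add: FF_def)
    also have "\<dots> \<le> exp (- x - t) * t powr c * (rGamma (c + 1) * exp (2 * x) * exp (t / 2))"
      using hb by (intro mult_left_mono) auto
    also have "\<dots> = K * (t powr c / exp (t/2))"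
    proof -
      have "exp (- x - t) * exp (2 * x) * exp (t / 2) = exp x / exp (t/2)"
        by (simp add: exp_add[symmetric] exp_diff[symmetric])
      thus ?thesis by (simp add: K_def field_simps)
    qed
    finally show "norm (FF c x t) \<le> norm (K * (t powr c / exp (t/2)))"
      using R0 by (simp add: K_def)
  qed
qed

lemma hh_zero: "hh c 0 t = rGamma (c + 1)"
proof -
  have "(\<lambda>k. aco c 0 k * t ^ k) = (\<lambda>k. if k = 0 then rGamma (c + 1) else 0)"
    by (auto simp: aco_def fun_eq_iff)
  moreover have "(\<lambda>k. if k = 0 then rGamma (c + 1) else 0) sums rGamma (c + 1)"
    using sums_single[of 0 "\<lambda>_. rGamma (c + 1)"] by simp
  ultimately show ?thesis unfolding hh_def by (simp add: sums_iff)
qed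

lemma integrand_eq:
  fixes \<mu> x s :: real
  assumes mu: "\<mu> \<ge> 1" and x: "x > 0" and s: "s > 0"
  shows "x powr ((1 - \<mu>) / 2) * (s powr ((\<mu> - 1) / 2) * exp (- s - x) * besselI (\<mu> - 1) (2 * sqrt (x * s)))
         = FF (\<mu> - 1) x s"
proof -
  define c where "c = \<mu> - 1"
  have c0: "c \<ge> 0" using mu by (simp add: c_def)
  have xs: "x * s > 0" using x s by simp
  have trm: "(2 * sqrt (x * s) / 2) powr (2 * real k + (\<mu> - 1)) * rGamma (real k + (\<mu> - 1) + 1) / fact k
      = (x * s) powr (c / 2) * (aco c x k * s ^ k)" for k
  proof -
    have "(2 * sqrt (x * s) / 2) powr (2 * real k + c) = ((x * s) powr (1/2)) powr (2 * real k + c)"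
      using xs by (simp add: powr_half_sqrt)
    also have "\<dots> = (x * s) powr (real k + c / 2)" by (simp add: powr_powr field_simps)
    also have "\<dots> = (x * s) ^ k * (x * s) powr (c / 2)" using xs by (simp add: powr_add powr_realpow)
    finally show ?thesis by (simp add: c_def aco_def power_mult_distrib)
  qed
  have "besselI (\<mu> - 1) (2 * sqrt (x * s)) = (\<Sum>k. (x * s) powr (c / 2) * (aco c x k * s ^ k))"
    unfolding besselI_def by (simp only: trm)
  also have "\<dots> = (x * s) powr (c / 2) * hh c x s"
    unfolding hh_def by (rule suminf_mult[OF aco_summable[OF c0 less_imp_le[OF x]]])
  finally have B: "besselI (\<mu> - 1) (2 * sqrt (x * s)) = (x * s) powr (c / 2) * hh c x s" .
  have e1: "x powr (- c / 2) * x powr (c / 2) = 1" using x by (simp add: powr_add[symmetric])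
  have e2: "s powr (c / 2) * s powr (c / 2) = s powr c" using s by (simp add: powr_add[symmetric])
  have "x powr ((1 - \<mu>) / 2) * (s powr ((\<mu> - 1) / 2) * exp (- s - x) * besselI (\<mu> - 1) (2 * sqrt (x * s)))
      = (x powr (- c / 2) * x powr (c / 2)) * (s powr (c / 2) * s powr (c / 2)) * exp (- s - x) * hh c x s"
    unfolding B by (simp add: c_def powr_mult minus_divide_left[symmetric] algebra_simps)
  also have "\<dots> = FF c x s" unfolding e1 e2 FF_def by (simp add: algebra_simps)
  finally show ?thesis by (simp add: c_def)
qed

lemma marcumQ_eq:
  fixes \<mu> x t :: real
  assumes mu: "\<mu> \<ge> 1" and x: "x \<ge> 0" and t: "t > 0"
  shows "marcumQ \<mu> x t = (LBINT s:{t..}. FF (\<mu> - 1) x s)"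
proof (cases "x = 0")
  case True
  have "marcumQ \<mu> x t = rGamma \<mu> * (LBINT s:{t..}. s powr (\<mu> - 1) * exp (- s))"
    using True by (simp add: marcumQ_def upper_Gamma_def rGamma_inverse_Gamma field_simps)
  also have "\<dots> = (LBINT s:{t..}. rGamma \<mu> * (s powr (\<mu> - 1) * exp (- s)))" by simp
  also have "\<dots> = (LBINT s:{t..}. FF (\<mu> - 1) x s)"
    by (rule set_lebesgue_integral_cong) (auto simp: True FF_def hh_zero)
  finally show ?thesis .
next
  case False
  hence xp: "x > 0" using x by simp
  have "marcumQ \<mu> x t = (LBINT s:{t..}. x powr ((1 - \<mu>) / 2) * (s powr ((\<mu> - 1) / 2) * exp (- s - x) * besselI (\<mu> - 1) (2 * sqrt (x * s))))"
    using False by (simp add: marcumQ_def)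
  also have "\<dots> = (LBINT s:{t..}. FF (\<mu> - 1) x s)"
    by (rule set_lebesgue_integral_cong) (use t in \<open>auto intro!: integrand_eq mu xp\<close>)
  finally show ?thesis .
qed

lemma tail_split:
  fixes c x a t :: real
  assumes c0: "c \<ge> 0" and x0: "x \<ge> 0" and a0: "a > 0" and at: "a \<le> t"
  shows "(LBINT s:{t..}. FF c x s) = (LBINT s:{a..}. FF c x s) - (LBINT s=a..t. FF c x s)"
proof -
  have ii: "set_integrable lborel {a<..} (FF c x)"
    by (rule set_integrable_subset[OF FF_integrable[OF c0 x0]]) (use a0 in auto)
  have eq1: "(LBINT s:{u..}. FF c x s) = (LBINT s=ereal u..\<infinity>. FF c x s)" for u
  proof -
    have "(LBINT s:{u..}. FF c x s) = (LBINT s:{u<..}. FF c x s)"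
      by (rule set_integral_discrete_difference[where X="{u}"]) auto
    also have "\<dots> = (LBINT s=ereal u..\<infinity>. FF c x s)"
      by (subst interval_integral_Ioi) auto
    finally show ?thesis .
  qed
  have "(LBINT s=ereal a..ereal t. FF c x s) + (LBINT s=ereal t..\<infinity>. FF c x s) = (LBINT s=ereal a..\<infinity>. FF c x s)"
  proof (rule interval_integral_sum)
    have "min (ereal a) (min (ereal t) \<infinity>) = ereal a" "max (ereal a) (max (ereal t) \<infinity>) = \<infinity>"
      using at by (auto simp: min_def max_def)
    thus "interval_lebesgue_integrable lborel (min (ereal a) (min (ereal t) \<infinity>)) (max (ereal a) (max (ereal t) \<infinity>)) (FF c x)"
      using ii by (simp add: interval_lebesgue_integrable_def)
  qed
  thus ?thesis using eq1[of t] eq1[of a] by simp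
qed


lemma Q_deriv:
  fixes c x t :: real
  assumes c0: "c \<ge> 0" and x0: "x \<ge> 0" and t0: "t > 0"
  shows "((\<lambda>u. LBINT s:{u..}. FF c x s) has_real_derivative (- FF c x t)) (at t)"
proof -
  define a where "a = t / 2"
  define b where "b = 2 * t"
  have a0: "a > 0" and ab: "a < t" "t < b" using t0 by (auto simp: a_def b_def)
  have cont: "continuous_on {a..b} (FF c x)"
    by (rule continuous_on_subset[OF FF_cont[OF c0 x0]]) (use a0 in auto)
  have "((\<lambda>u. LBINT s=a..u. FF c x s) has_vector_derivative (FF c x t)) (at t within {a..b})"
    by (rule interval_integral_FTC2[OF order_refl _ cont]) (use ab in auto)
  moreover have "at t within {a..b} = at t"
    by (rule at_within_interior) (use ab in auto)
  ultimately have "((\<lambda>u. LBINT s=a..u. FF c x s) has_real_derivative (FF c x t)) (at t)"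
    by (simp add: has_real_derivative_iff_has_vector_derivative)
  hence "((\<lambda>u. (LBINT s:{a..}. FF c x s) - (LBINT s=a..u. FF c x s)) has_real_derivative (- FF c x t)) (at t)"
    using DERIV_diff[OF DERIV_const[of "LBINT s:{a..}. FF c x s"]] by simp
  thus ?thesis
  proof (rule has_field_derivative_transform_within_open[where S="{a<..}"])
    fix u assume "u \<in> {a<..}"
    thus "(LBINT s:{a..}. FF c x s) - (LBINT s=a..u. FF c x s) = (LBINT s:{u..}. FF c x s)"
      using tail_split[OF c0 x0 a0, of u] by simp
  qed (use ab in auto)
qed




lemma FF_deriv:
  fixes c x t :: real
  assumes c0: "c \<ge> 0" and x0: "x \<ge> 0" and t0: "t > 0"
  shows "(FF c x has_real_derivative
           exp (- x - t) * t powr (c - 1) * ((c - t) * hh c x t + t * (\<Sum>n. diffs (aco c x) n * t ^ n))) (at t)"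
proof -
  define H' where "H' = (\<Sum>n. diffs (aco c x) n * t ^ n)"
  have pw: "((\<lambda>t. t powr c) has_real_derivative t powr c * (0 * ln t + 1 * c / t)) (at t)"
    by (rule DERIV_powr) (auto intro!: DERIV_ident DERIV_const t0)
  have ex: "((\<lambda>t. exp (- x - t)) has_real_derivative (exp (- x - t) * (0 - 1))) (at t)"
    by (rule DERIV_exp[THEN DERIV_chain2]) (rule DERIV_diff[OF DERIV_const DERIV_ident])
  have hd: "(hh c x has_real_derivative H') (at t)" unfolding H'_def by (rule hh_deriv[OF c0 x0])
  have m1: "((\<lambda>t. exp (- x - t) * t powr c) has_real_derivative
        (exp (- x - t) * (0 - 1)) * t powr c + (t powr c * (0 * ln t + 1 * c / t)) * exp (- x - t)) (at t)"
    by (rule DERIV_mult[OF ex pw])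
  have m2: "((\<lambda>t. exp (- x - t) * t powr c * hh c x t) has_real_derivative
        ((exp (- x - t) * (0 - 1)) * t powr c + (t powr c * (0 * ln t + 1 * c / t)) * exp (- x - t)) * hh c x t
         + H' * (exp (- x - t) * t powr c)) (at t)"
    by (rule DERIV_mult[OF m1 hd])
  have pc: "t powr c = t * t powr (c - 1)" using t0 by (simp add: powr_mult_base)
  have "((exp (- x - t) * (0 - 1)) * t powr c + (t powr c * (0 * ln t + 1 * c / t)) * exp (- x - t)) * hh c x t
         + H' * (exp (- x - t) * t powr c)
      = exp (- x - t) * t powr (c - 1) * ((c - t) * hh c x t + t * H')"
    unfolding pc using t0 by (simp add: field_simps)
  with m2 show ?thesis unfolding FF_def[abs_def] H'_def by simp
qed
lemma yH:
  fixes c x y :: real assumes c0: "c \<ge> 0" and x0: "x \<ge> 0"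
  shows "y * (\<Sum>n. diffs (aco c x) n * y ^ n) = (\<Sum>k. real k * (aco c x k * y ^ k))"
proof -
  have sd: "summable (\<lambda>n. diffs (aco c x) n * y ^ n)"
    by (rule termdiff_converges_all) (rule aco_summable[OF c0 x0])
  define g where "g = (\<lambda>k. real k * (aco c x k * y ^ k))"
  have "(\<lambda>n. y * (diffs (aco c x) n * y ^ n)) sums (y * (\<Sum>n. diffs (aco c x) n * y ^ n))"
    by (intro sums_mult summable_sums sd)
  moreover have "y * (diffs (aco c x) n * y ^ n) = g (Suc n)" for n
    by (simp add: g_def diffs_def)
  ultimately have "(\<lambda>n. g (Suc n)) sums (y * (\<Sum>n. diffs (aco c x) n * y ^ n))" by simp
  hence "g sums (y * (\<Sum>n. diffs (aco c x) n * y ^ n) + g 0)" by (simp add: sums_Suc_iff)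
  hence "g sums (y * (\<Sum>n. diffs (aco c x) n * y ^ n))" by (simp add: g_def)
  thus ?thesis by (simp add: g_def sums_iff)
qed

lemma deriv1:
  fixes \<mu> x u :: real
  assumes mu: "\<mu> \<ge> 1" and x0: "x \<ge> 0" and u0: "u > 0"
  shows "((\<lambda>t. marcumQ \<mu> x t) has_real_derivative (- FF (\<mu> - 1) x u)) (at u)"
proof -
  have c0: "\<mu> - 1 \<ge> 0" using mu by simp
  show ?thesis
  proof (rule has_field_derivative_transform_within_open[OF Q_deriv[OF c0 x0 u0], where S="{0<..}"])
    fix t :: real assume "t \<in> {0<..}"
    thus "(LBINT s:{t..}. FF (\<mu> - 1) x s) = marcumQ \<mu> x t" using marcumQ_eq[OF mu x0] by simp
  qed (use u0 in auto)
qed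

lemma deriv2:
  fixes \<mu> x y :: real
  assumes mu: "\<mu> \<ge> 1" and x0: "x \<ge> 0" and y0: "y > 0"
  shows "deriv (deriv (\<lambda>t. marcumQ \<mu> x t)) y =
     - (exp (- x - y) * y powr (\<mu> - 1 - 1) * ((\<mu> - 1 - y) * hh (\<mu> - 1) x y + y * (\<Sum>n. diffs (aco (\<mu> - 1) x) n * y ^ n)))"
proof -
  have c0: "\<mu> - 1 \<ge> 0" using mu by simp
  have ev: "eventually (\<lambda>u. deriv (\<lambda>t. marcumQ \<mu> x t) u = - FF (\<mu> - 1) x u) (nhds y)"
  proof -
    have "eventually (\<lambda>u. u \<in> {0<..}) (nhds y)"
      by (rule eventually_nhds_in_open) (use y0 in auto)
    thus ?thesis by eventually_elim (auto intro!: DERIV_imp_deriv deriv1 mu x0)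
  qed
  have "deriv (deriv (\<lambda>t. marcumQ \<mu> x t)) y = deriv (\<lambda>u. - FF (\<mu> - 1) x u) y"
    by (rule deriv_cong_ev[OF ev refl])
  also have "\<dots> = - (exp (- x - y) * y powr (\<mu> - 1 - 1) * ((\<mu> - 1 - y) * hh (\<mu> - 1) x y + y * (\<Sum>n. diffs (aco (\<mu> - 1) x) n * y ^ n)))"
    by (intro DERIV_imp_deriv DERIV_minus FF_deriv c0 x0 y0)
  finally show ?thesis .
qed

lemma u_rec:
  fixes c x y :: real assumes c0: "c \<ge> 0"
  shows "(x * y) * (aco c x k * y ^ k) = (real k + 1) * (real k + 1 + c) * (aco c x (Suc k) * y ^ Suc k)"
proof -
  define z where "z = real k + c + 1"
  have z0: "z > 0" using c0 by (simp add: z_def)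
  have e: "real (Suc k) + c + 1 = z + 1" by (simp add: z_def)
  have r: "z * rGamma (z + 1) = rGamma z" by (rule rGamma_plus1)
  have a1: "aco c x (Suc k) * y ^ Suc k = ((x * y) * (x ^ k * y ^ k) * rGamma (z + 1)) / ((real k + 1) * fact k)"
    unfolding aco_def e by (simp add: fact_Suc mult_ac)
  have a0: "aco c x k * y ^ k = (x ^ k * y ^ k) * rGamma z / fact k"
    unfolding aco_def z_def by (simp add: mult_ac)
  have kz: "real k + 1 + c = z" by (simp add: z_def)
  have "(real k + 1) * (real k + 1 + c) * (aco c x (Suc k) * y ^ Suc k)
      = ((real k + 1) / (real k + 1)) * ((x * y) * (x ^ k * y ^ k) * (z * rGamma (z + 1)) / fact k)"
    unfolding a1 kz by (simp add: mult_ac)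
  also have "\<dots> = (x * y) * ((x ^ k * y ^ k) * rGamma z / fact k)" unfolding r by simp
  finally show ?thesis unfolding a0 by simp
qed

lemma u_summable2:
  fixes c x y :: real assumes c0: "c \<ge> 0" and x0: "x \<ge> 0" and y0: "y \<ge> 0"
  shows "summable (\<lambda>k. real k ^ 2 * (aco c x k * y ^ k))"
proof (rule summable_comparison_test)
  define R where "R = rGamma (c + 1)"
  have R0: "R \<ge> 0" using rG[of c 0] c0 by (simp add: R_def)
  show "summable (\<lambda>k. R * ((4 * x * y) ^ k / fact k))"
    by (intro summable_mult) (use summable_exp_generic[of "4 * x * y"] in \<open>simp add: divide_inverse mult.commute\<close>)
  show "\<exists>N. \<forall>n\<ge>N. norm (real n ^ 2 * (aco c x n * y ^ n)) \<le> R * ((4 * x * y) ^ n / fact n)"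
  proof (intro exI allI impI)
    fix n :: nat
    have k2: "real n ^ 2 \<le> 4 ^ n"
    proof -
      have "n < 2 ^ n" by (rule less_exp)
      hence "real n \<le> real (2 ^ n)" by linarith
      hence "real n \<le> 2 ^ n" by simp
      hence "real n ^ 2 \<le> (2 ^ n) ^ 2" by (intro power_mono) auto
      also have "(2 ^ n) ^ 2 = (4::real) ^ n"
        by (simp add: power2_eq_square power_mult_distrib[symmetric])
      finally show ?thesis .
    qed
    have b: "\<bar>aco c x n * y ^ n\<bar> \<le> R * ((x * y) ^ n / fact n)"
    proof -
      have "\<bar>aco c x n * y ^ n\<bar> \<le> R * ((x * y) ^ n / fact n) / fact n"
        using aco_bound[OF c0 x0, of n y] y0 by (simp add: R_def)
      also have "\<dots> \<le> R * ((x * y) ^ n / fact n)"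
        using R0 x0 y0 divide_left_mono[of 1 "fact n" "R * ((x * y) ^ n / fact n)"]
        by (simp add: fact_ge_1)
      finally show ?thesis .
    qed
    have "norm (real n ^ 2 * (aco c x n * y ^ n)) = real n ^ 2 * \<bar>aco c x n * y ^ n\<bar>"
      by (simp add: abs_mult)
    also have "\<dots> \<le> 4 ^ n * (R * ((x * y) ^ n / fact n))"
      using k2 b by (intro mult_mono) auto
    also have "\<dots> = R * ((4 * x * y) ^ n / fact n)" by (simp add: power_mult_distrib)
    finally show "norm (real n ^ 2 * (aco c x n * y ^ n)) \<le> R * ((4 * x * y) ^ n / fact n)" .
  qed
qed

theorem theorem2:
  fixes \<mu> x y :: real
  assumes "\<mu> \<ge> 1" and "x \<ge> 0" and "y > 0"
  shows "(y > x + \<mu> - 1 \<longrightarrow> deriv (deriv (\<lambda>t. marcumQ \<mu> x t)) y > 0)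
       \<and> (y < x + \<mu> - 2 \<longrightarrow> deriv (deriv (\<lambda>t. marcumQ \<mu> x t)) y < 0)
       \<and> (\<mu> \<ge> 3/2 \<and> y < x + \<mu> - 3/2 \<longrightarrow> deriv (deriv (\<lambda>t. marcumQ \<mu> x t)) y < 0)"
proof -
  note mu = assms(1) and x0 = assms(2) and y0 = assms(3)
  define c where "c = \<mu> - 1"
  have c0: "c \<ge> 0" using mu by (simp add: c_def)
  define u where "u = (\<lambda>k. aco c x k * y ^ k)"
  have rec: "\<And>k. (x * y) * u k = (real k + 1) * (real k + 1 + c) * u (Suc k)"
    unfolding u_def by (rule u_rec[OF c0])
  have nn: "\<And>k. u k \<ge> 0" unfolding u_def using aco_nonneg[OF c0 x0] y0 by simp
  have su: "summable u" unfolding u_def by (rule aco_summable[OF c0 x0])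
  have su2: "summable (\<lambda>k. real k ^ 2 * u k)" unfolding u_def by (rule u_summable2[OF c0 x0]) (use y0 in auto)
  have Apos: "suminf u > 0"
  proof (rule suminf_pos2[OF su nn])
    show "0 < u 0" using rG[of c 0] c0 by (simp add: u_def aco_def)
  qed
  note CS = core_sign[OF rec nn c0 x0 y0 su su2 Apos]
  define E where "E = (c - y) * suminf u + (\<Sum>k. real k * u k)"
  have E_eq: "(\<mu> - 1 - y) * hh (\<mu> - 1) x y + y * (\<Sum>n. diffs (aco (\<mu> - 1) x) n * y ^ n) = E"
    unfolding E_def u_def hh_def c_def[symmetric] yH[OF c0 x0] by simp
  define P where "P = exp (- x - y) * y powr (\<mu> - 1 - 1)"
  have P0: "P > 0" using y0 by (simp add: P_def)
  have D: "deriv (deriv (\<lambda>t. marcumQ \<mu> x t)) y = - (P * E)"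
    using deriv2[OF mu x0 y0] unfolding E_eq P_def by simp
  have 1: "deriv (deriv (\<lambda>t. marcumQ \<mu> x t)) y > 0" if "y > x + \<mu> - 1"
  proof -
    have "E < 0" unfolding E_def by (rule CS(1)) (use that in \<open>simp add: c_def\<close>)
    thus ?thesis using P0 D by (simp add: mult_pos_neg)
  qed
  have 2: "deriv (deriv (\<lambda>t. marcumQ \<mu> x t)) y < 0" if "y < x + \<mu> - 2"
  proof -
    have "E > 0" unfolding E_def by (rule CS(2)) (use that in \<open>simp add: c_def\<close>)
    thus ?thesis using P0 D by simp
  qed
  have 3: "deriv (deriv (\<lambda>t. marcumQ \<mu> x t)) y < 0" if "\<mu> \<ge> 3/2" "y < x + \<mu> - 3/2"
  proof -
    have "E > 0" unfolding E_def by (rule CS(3)) (use that in \<open>simp_all add: c_def\<close>)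
    thus ?thesis using P0 D by simp
  qed
  show ?thesis using 1 2 3 by blast
qed


end
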